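(* Let $S$ be a finite state space, $P$ a row-stochastic $|S|\times|S|$ matrix (the transition matrix induced by a target policy $\pi$), $\beta\in(0,1)$, $d_\mu$ a probability vector on $S$ (the stationary distribution of a behavior policy $\mu$), and $f^\top=d_\mu^\top(I-\beta P)^{-1}$, assumed to satisfy $f(s)>0$ for all $s$. Let $\kappa=\min_s \frac{d_\mu(s)}{f(s)}$. Then $0\le\kappa\le 1-\beta$. Moreover, $\kappa=0$ when there is a state visited by the target policy but not by the behavior policy (i.e. a state $s$ with $d_\mu(s)=0$ and $[d_\mu^\top P^t](s)>0$ for some $t\ge 0$), and $\kappa=1-\beta$ when the two policies are identical (so that $d_\mu$ equals the stationary distribution $d_\pi$ of $P$, i.e. $d_\mu^\top P=d_\mu^\top$).
   Context: $d_\pi$ denotes the stationary distribution over states induced by the target policy, i.e. a probability vector with $d_\pi^\top P=d_\pi^\top$. *)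

theory Defs
  imports "HOL-Analysis.Analysis"
begin

primrec matpow :: "real^'n^'n \<Rightarrow> nat \<Rightarrow> real^'n^'n" where
  "matpow P 0 = mat 1"
| "matpow P (Suc t) = matpow P t ** P"

definition row_stochastic :: "real^'n^'n \<Rightarrow> bool" where
  "row_stochastic P \<longleftrightarrow> (\<forall>i j. 0 \<le> P$i$j) \<and> (\<forall>i. (\<Sum>j\<in>UNIV. P$i$j) = 1)"

definition prob_vector :: "real^'n \<Rightarrow> bool" where
  "prob_vector d \<longleftrightarrow> (\<forall>i. 0 \<le> d$i) \<and> (\<Sum>i\<in>UNIV. d$i) = 1"

end

theory Submission
  imports Defs
begin

lemma mv_comp:
  fixes P :: "real^'s^'s"
  shows "((mat 1 - \<beta> *\<^sub>R P) *v x)$i = x$i - \<beta> * (\<Sum>j\<in>UNIV. P$i$j * x$j)"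
proof -
  have "((mat 1 - \<beta> *\<^sub>R P) *v x)$i = (\<Sum>j\<in>UNIV. (if i = j then x$j else 0) - \<beta> * (P$i$j * x$j))"
    by (simp add: matrix_vector_mult_def mat_def algebra_simps) (rule sum.cong, auto)
  also have "\<dots> = x$i - \<beta> * (\<Sum>j\<in>UNIV. P$i$j * x$j)"
    by (simp add: sum_subtractf sum_distrib_left)
  finally show ?thesis .
qed

lemma vm_comp:
  fixes P :: "real^'s^'s"
  shows "(x v* (mat 1 - \<beta> *\<^sub>R P))$i = x$i - \<beta> * (\<Sum>j\<in>UNIV. x$j * P$j$i)"
proof -
  have "(x v* (mat 1 - \<beta> *\<^sub>R P))$i = (\<Sum>j\<in>UNIV. (if j = i then x$j else 0) - \<beta> * (x$j * P$j$i))"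
    by (simp add: vector_matrix_mult_def mat_def algebra_simps) (rule sum.cong, auto)
  also have "\<dots> = x$i - \<beta> * (\<Sum>j\<in>UNIV. x$j * P$j$i)"
    by (simp add: sum_subtractf sum_distrib_left)
  finally show ?thesis .
qed

lemma ker_zero:
  fixes P :: "real^'s^'s"
  assumes P: "row_stochastic P" and b: "0 \<le> \<beta>" "\<beta> < 1"
    and x: "(mat 1 - \<beta> *\<^sub>R P) *v x = 0"
  shows "x = 0"
proof -
  define m where "m = Max (range (\<lambda>j. \<bar>x$j\<bar>))"
  have mge: "\<bar>x$j\<bar> \<le> m" for j unfolding m_def by (rule Max_ge) auto
  have "m \<in> range (\<lambda>j. \<bar>x$j\<bar>)" unfolding m_def by (rule Max_in) auto
  then obtain i where mi: "m = \<bar>x$i\<bar>" by auto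
  have xi: "x$i = \<beta> * (\<Sum>j\<in>UNIV. P$i$j * x$j)"
    using arg_cong[OF x, of "\<lambda>v. v$i"] by (simp add: mv_comp)
  have Pnn: "\<And>i j. 0 \<le> P$i$j" and Ps: "\<And>i. (\<Sum>j\<in>UNIV. P$i$j) = 1"
    using P unfolding row_stochastic_def by auto
  have "\<bar>\<Sum>j\<in>UNIV. P$i$j * x$j\<bar> \<le> (\<Sum>j\<in>UNIV. P$i$j * m)"
  proof -
    have "\<bar>\<Sum>j\<in>UNIV. P$i$j * x$j\<bar> \<le> (\<Sum>j\<in>UNIV. \<bar>P$i$j * x$j\<bar>)" by (rule sum_abs)
    also have "\<dots> \<le> (\<Sum>j\<in>UNIV. P$i$j * m)"
      by (rule sum_mono) (simp add: abs_mult Pnn mult_left_mono mge)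
    finally show ?thesis .
  qed
  also have "\<dots> = m" using Ps[of i] by (simp add: sum_distrib_right[symmetric])
  finally have S: "\<bar>\<Sum>j\<in>UNIV. P$i$j * x$j\<bar> \<le> m" .
  have "m = \<beta> * \<bar>\<Sum>j\<in>UNIV. P$i$j * x$j\<bar>" using xi mi b by (simp add: abs_mult)
  also have "\<dots> \<le> \<beta> * m" using S b by (simp add: mult_left_mono)
  finally have "m \<le> \<beta> * m" .
  then have "(1 - \<beta>) * m \<le> 0" by (simp add: algebra_simps)
  moreover have "0 < 1 - \<beta>" using b by simp
  ultimately have "m \<le> 0" by (simp add: mult_le_0_iff)
  then have "\<forall>j. x$j = 0" using mge by (meson abs_le_zero_iff order_trans)
  then show ?thesis by (simp add: vec_eq_iff)
qed

theorem lemma1: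
  fixes P :: "real^'s^'s" and d\<mu> f :: "real^'s" and \<beta> \<kappa> :: real
  assumes P: "row_stochastic P"
    and \<beta>: "0 < \<beta>" "\<beta> < 1"
    and d: "prob_vector d\<mu>"
    and f_def: "f = d\<mu> v* matrix_inv (mat 1 - \<beta> *\<^sub>R P)"
    and f_pos: "\<forall>s. 0 < f$s"
    and \<kappa>_def: "\<kappa> = Min (range (\<lambda>s. d\<mu>$s / f$s))"
  shows "0 \<le> \<kappa> \<and> \<kappa> \<le> 1 - \<beta>
    \<and> ((\<exists>s. d\<mu>$s = 0 \<and> (\<exists>t. 0 < (d\<mu> v* matpow P t)$s)) \<longrightarrow> \<kappa> = 0)
    \<and> (d\<mu> v* P = d\<mu> \<longrightarrow> \<kappa> = 1 - \<beta>)"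
proof -
  define M where "M = mat 1 - \<beta> *\<^sub>R P"
  have "\<exists>B. B ** M = mat 1"
    unfolding matrix_left_invertible_ker M_def using ker_zero[OF P] \<beta> by (meson less_imp_le)
  then have "invertible M" by (simp add: invertible_left_inverse)
  then have inv: "M ** matrix_inv M = mat 1 \<and> matrix_inv M ** M = mat 1"
    unfolding matrix_inv_def invertible_def by (rule someI_ex)
  have fM: "f v* M = d\<mu>"
    using inv by (simp add: f_def M_def[symmetric] vector_matrix_mul_assoc)
  have Pnn: "\<And>i j. 0 \<le> P$i$j" and Ps: "\<And>i. (\<Sum>j\<in>UNIV. P$i$j) = 1"
    using P unfolding row_stochastic_def by auto
  have dnn: "\<And>i. 0 \<le> d\<mu>$i" and ds: "(\<Sum>i\<in>UNIV. d\<mu>$i) = 1"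
    using d unfolding prob_vector_def by auto
  have dcomp: "d\<mu>$s = f$s - \<beta> * (\<Sum>j\<in>UNIV. f$j * P$j$s)" for s
    using arg_cong[OF fM, of "\<lambda>v. v$s"] by (simp add: M_def vm_comp)
  have "(\<Sum>s\<in>UNIV. d\<mu>$s) = (\<Sum>s\<in>UNIV. f$s) - \<beta> * (\<Sum>s\<in>UNIV. \<Sum>j\<in>UNIV. f$j * P$j$s)"
    by (simp add: dcomp sum_subtractf sum_distrib_left)
  also have "(\<Sum>s\<in>UNIV. \<Sum>j\<in>UNIV. f$j * P$j$s) = (\<Sum>j\<in>UNIV. f$j)"
    by (subst sum.swap) (simp add: sum_distrib_left[symmetric] Ps)
  finally have fs: "(1 - \<beta>) * (\<Sum>s\<in>UNIV. f$s) = 1" using ds by (simp add: algebra_simps)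
  let ?R = "range (\<lambda>s. d\<mu>$s / f$s)"
  have fin: "finite ?R" by simp
  have kle: "\<kappa> \<le> d\<mu>$s / f$s" for s unfolding \<kappa>_def by (rule Min_le) auto
  have "\<kappa> \<in> ?R" unfolding \<kappa>_def by (rule Min_in) auto
  then obtain s0 where ks0: "\<kappa> = d\<mu>$s0 / f$s0" by auto
  have k0: "0 \<le> \<kappa>" using ks0 dnn[of s0] f_pos by (simp add: less_imp_le)
  have kf: "\<kappa> * f$s \<le> d\<mu>$s" for s
    using kle[of s] f_pos by (simp add: pos_le_divide_eq)
  have "\<kappa> * (\<Sum>s\<in>UNIV. f$s) \<le> 1"
    using sum_mono[of UNIV "\<lambda>s. \<kappa> * f$s" "\<lambda>s. d\<mu>$s", OF kf] ds
    by (simp add: sum_distrib_left)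
  then have "\<kappa> * (\<Sum>s\<in>UNIV. f$s) \<le> (1 - \<beta>) * (\<Sum>s\<in>UNIV. f$s)" using fs by simp
  moreover have "0 < (\<Sum>s\<in>UNIV. f$s)"
    using fs \<beta> by (smt (verit) mult_nonneg_nonpos)
  ultimately have k1: "\<kappa> \<le> 1 - \<beta>" by simp
  have c2: "\<kappa> = 0" if "\<exists>s. d\<mu>$s = 0 \<and> (\<exists>t. 0 < (d\<mu> v* matpow P t)$s)"
  proof -
    from that obtain s where "d\<mu>$s = 0" by auto
    then show ?thesis using kle[of s] k0 by simp
  qed
  have c3: "\<kappa> = 1 - \<beta>" if st: "d\<mu> v* P = d\<mu>"
  proof -
    define g where "g = (1 / (1 - \<beta>)) *\<^sub>R d\<mu>"
    have "g v* M = d\<mu>"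
    proof (subst vec_eq_iff, rule allI)
      fix s
      have "(\<Sum>j\<in>UNIV. g$j * P$j$s) = (1 / (1 - \<beta>)) * (d\<mu> v* P)$s"
        by (simp add: g_def vector_matrix_mult_def sum_distrib_left mult.assoc)
      then have "(\<Sum>j\<in>UNIV. g$j * P$j$s) = (1 / (1 - \<beta>)) * d\<mu>$s" using st by simp
      then have H: "(\<Sum>j\<in>UNIV. g$j * P$j$s) = d\<mu>$s / (1 - \<beta>)" by simp
      have "(g v* M)$s = g$s - \<beta> * (\<Sum>j\<in>UNIV. g$j * P$j$s)" by (simp add: M_def vm_comp)
      also have "\<dots> = d\<mu>$s / (1 - \<beta>) - \<beta> * (d\<mu>$s / (1 - \<beta>))" using H by (simp add: g_def)
      also have "\<dots> = (1 - \<beta>) * (d\<mu>$s / (1 - \<beta>))" by (simp only: left_diff_distrib mult_1_left)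
      also have "\<dots> = d\<mu>$s" using \<beta> by simp
      finally show "(g v* M)$s = d\<mu>$s" .
    qed
    then have "f = g" using fM inv
      by (metis vector_matrix_mul_assoc vector_matrix_mul_rid)
    then have "d\<mu>$s / f$s = 1 - \<beta>" for s
      using f_pos[rule_format, of s] \<beta> by (auto simp: g_def field_simps)
    then show ?thesis using ks0 by simp
  qed
  show ?thesis using k0 k1 c2 c3 by blast
qed

end
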